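(* Let $n\ge1$, $\mathbf x\in[0,1]^n$, $n_1=|\{i:x_i\in[0,\tfrac12]\}|$, $n_2=|\{i:x_i\in(\tfrac12,1]\}|$, and let the Majority Vote mechanism output $y=0$ if $n_1\le n_2$ and $y=1$ otherwise. Then for every $1\le p<\infty$, $$\Big(\sum_i(1-|x_i-y|)^p\Big)^{1/p}\le(2^p+1)^{1/p}\min_{z\in[0,1]}\Big(\sum_i(1-|x_i-z|)^p\Big)^{1/p},$$ and $\max_i(1-|x_i-y|)\le 2\min_{z\in[0,1]}\max_i(1-|x_i-z|)$. That is, Majority Vote is a $(2^p+1)^{1/p}$-approximation for the $L_p$ social cost for $1\le p<\infty$ and a $2$-approximation for the $L_\infty$ social cost (maximum cost).
   Context: Obnoxious facility location on $[0,1]$: agent $i$ at $x_i$ incurs cost $c(x_i,y)=1-|x_i-y|$ from a facility at $y$. $L_p$ social cost: $\mathrm{sc}_p(y,\mathbf x)=(\sum_ic(x_i,y)^p)^{1/p}$, and $\mathrm{sc}_\infty(y,\mathbf x)=\max_ic(x_i,y)$; to be minimized. *)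

theory Defs
  imports "HOL-Analysis.Analysis"
begin

definition cost :: "real \<Rightarrow> real \<Rightarrow> real" where
  "cost xi y = 1 - \<bar>xi - y\<bar>"

definition sc_p :: "real \<Rightarrow> nat \<Rightarrow> (nat \<Rightarrow> real) \<Rightarrow> real \<Rightarrow> real" where
  "sc_p p n x y = (\<Sum>i<n. cost (x i) y powr p) powr (1 / p)"

definition sc_inf :: "nat \<Rightarrow> (nat \<Rightarrow> real) \<Rightarrow> real \<Rightarrow> real" where
  "sc_inf n x y = Max ((\<lambda>i. cost (x i) y) ` {..<n})"

definition majority_vote :: "nat \<Rightarrow> (nat \<Rightarrow> real) \<Rightarrow> real" where
  "majority_vote n x =
     (let n1 = card {i \<in> {..<n}. 0 \<le> x i \<and> x i \<le> 1/2};
          n2 = card {i \<in> {..<n}. 1/2 < x i \<and> x i \<le> 1}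
      in if n1 \<le> n2 then 0 else 1)"

end

theory Submission
  imports Defs
begin

lemma sum_bound:
  fixes c0 cz :: "nat \<Rightarrow> real" and p :: real and I :: "nat set"
  assumes p: "1 \<le> p" and fin: "finite I"
    and bnd: "\<forall>i\<in>I. 0 \<le> c0 i \<and> c0 i \<le> 1 \<and> 0 \<le> cz i"
    and alt: "(\<forall>i\<in>I. c0 i \<le> 2 * cz i) \<or>
      (\<exists>B\<subseteq>I. card (I-B) \<le> card B \<and> (\<forall>i\<in>B. c0 i \<le> 1/2 \<and> 1/2 \<le> cz i))"
  shows "(\<Sum>i\<in>I. c0 i powr p) \<le> (2 powr p + 1) * (\<Sum>i\<in>I. cz i powr p)"
  using alt
proof
  assume h: "\<forall>i\<in>I. c0 i \<le> 2 * cz i"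
  have "(\<Sum>i\<in>I. c0 i powr p) \<le> (\<Sum>i\<in>I. (2 powr p + 1) * cz i powr p)"
  proof (rule sum_mono)
    fix i assume i: "i \<in> I"
    have "c0 i powr p \<le> (2 * cz i) powr p"
      using h i bnd p by (intro powr_mono2) auto
    also have "\<dots> = 2 powr p * cz i powr p" using bnd i by (simp add: powr_mult)
    also have "\<dots> \<le> (2 powr p + 1) * cz i powr p" by (simp add: distrib_right)
    finally show "c0 i powr p \<le> (2 powr p + 1) * cz i powr p" .
  qed
  then show ?thesis by (simp add: sum_distrib_left)
next
  assume "\<exists>B\<subseteq>I. card (I-B) \<le> card B \<and> (\<forall>i\<in>B. c0 i \<le> 1/2 \<and> 1/2 \<le> cz i)"
  then obtain B where B: "B \<subseteq> I" "card (I-B) \<le> card B"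
    "\<forall>i\<in>B. c0 i \<le> 1/2 \<and> 1/2 \<le> cz i" by blast
  define h where "h = (1/2::real) powr p"
  have h0: "0 \<le> h" unfolding h_def by simp
  have h2: "2 powr p * h = 1" unfolding h_def by (simp add: powr_mult[symmetric])
  have finB: "finite B" using B(1) fin finite_subset by blast
  have s1: "(\<Sum>i\<in>I-B. c0 i powr p) \<le> (\<Sum>i\<in>I-B. 1)"
  proof (rule sum_mono)
    fix i assume "i \<in> I - B"
    then have "0 \<le> c0 i" "c0 i \<le> 1" using bnd by auto
    then have "c0 i powr p \<le> 1 powr p" using p by (intro powr_mono2) auto
    then show "c0 i powr p \<le> 1" by simp
  qed
  have s2: "(\<Sum>i\<in>B. c0 i powr p) \<le> (\<Sum>i\<in>B. h)"
  proof (rule sum_mono)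
    fix i assume i: "i \<in> B"
    then show "c0 i powr p \<le> h" unfolding h_def using B bnd p
      by (intro powr_mono2) auto
  qed
  have s3: "(\<Sum>i\<in>B. h) \<le> (\<Sum>i\<in>B. cz i powr p)"
  proof (rule sum_mono)
    fix i assume i: "i \<in> B"
    then show "h \<le> cz i powr p" unfolding h_def using B bnd p
      by (intro powr_mono2) auto
  qed
  have s4: "(\<Sum>i\<in>I-B. cz i powr p) \<ge> 0" by (simp add: sum_nonneg)
  have split0: "(\<Sum>i\<in>I. c0 i powr p) = (\<Sum>i\<in>B. c0 i powr p) + (\<Sum>i\<in>I-B. c0 i powr p)"
    using B(1) fin by (metis sum.subset_diff add.commute)
  have splitz: "(\<Sum>i\<in>I. cz i powr p) = (\<Sum>i\<in>B. cz i powr p) + (\<Sum>i\<in>I-B. cz i powr p)"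
    using B(1) fin by (metis sum.subset_diff add.commute)
  have cB: "real (card (I-B)) \<le> real (card B)" using B(2) by simp
  have "(\<Sum>i\<in>I. c0 i powr p) \<le> real (card B) * h + real (card (I-B))"
    using split0 s1 s2 by simp
  also have "\<dots> \<le> real (card B) * h + real (card B) * (2 powr p * h)"
    using cB h2 by simp
  also have "\<dots> = (2 powr p + 1) * (real (card B) * h)" by (simp add: algebra_simps)
  also have "\<dots> \<le> (2 powr p + 1) * (\<Sum>i\<in>I. cz i powr p)"
  proof (rule mult_left_mono)
    show "real (card B) * h \<le> (\<Sum>i\<in>I. cz i powr p)" using s3 s4 splitz by simp
  qed (simp add: add_nonneg_nonneg)
  finally show ?thesis .
qed

lemma core:
  fixes n :: nat and x :: "nat \<Rightarrow> real" and z :: real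
  assumes x01: "\<And>i. i < n \<Longrightarrow> x i \<in> {0..1}" and z: "z \<in> {0..1}"
  shows "(\<forall>i\<in>{..<n}. cost (x i) (majority_vote n x) \<le> 2 * cost (x i) z) \<or>
      (\<exists>B\<subseteq>{..<n}. card ({..<n}-B) \<le> card B \<and>
         (\<forall>i\<in>B. cost (x i) (majority_vote n x) \<le> 1/2 \<and> 1/2 \<le> cost (x i) z))"
proof -
  define L where "L = {i \<in> {..<n}. 0 \<le> x i \<and> x i \<le> 1/2}"
  define R where "R = {i \<in> {..<n}. 1/2 < x i \<and> x i \<le> 1}"
  have LR: "{..<n} - R = L" "{..<n} - L = R" "R \<subseteq> {..<n}" "L \<subseteq> {..<n}"
    using x01 unfolding L_def R_def by force+
  show ?thesis
  proof (cases "card L \<le> card R")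
    case True
    then have y: "majority_vote n x = 0" unfolding majority_vote_def L_def R_def Let_def by simp
    show ?thesis
    proof (cases "z \<le> 1/2")
      case True
      then show ?thesis using x01 z unfolding y cost_def
        by (intro disjI1 ballI) (force simp: abs_if)
    next
      case False
      then show ?thesis using x01 z \<open>card L \<le> card R\<close> LR unfolding y cost_def
        by (intro disjI2 exI[of _ R]) (auto simp: abs_if R_def)
    qed
  next
    case False
    then have y: "majority_vote n x = 1" unfolding majority_vote_def L_def R_def Let_def by simp
    show ?thesis
    proof (cases "z \<ge> 1/2")
      case True
      then show ?thesis using x01 z unfolding y cost_def
        by (intro disjI1 ballI) (force simp: abs_if)
    next
      case F: False
      then show ?thesis using x01 z \<open>\<not> card L \<le> card R\<close> LR unfolding y cost_def
        by (intro disjI2 exI[of _ L]) (auto simp: abs_if L_def)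
    qed
  qed
qed

lemma cost_bnds:
  assumes "a \<in> {0..1}" "b \<in> {0..1}"
  shows "0 \<le> cost a b \<and> cost a b \<le> 1"
  using assms unfolding cost_def by (auto simp: abs_if)

lemma mv01: "majority_vote n x \<in> {0..1}"
  unfolding majority_vote_def Let_def by simp

theorem theorem10:
  fixes n :: nat and x :: "nat \<Rightarrow> real"
  assumes "n \<ge> 1"
    and "\<And>i. i < n \<Longrightarrow> x i \<in> {0..1}"
  shows "(\<forall>p::real. 1 \<le> p \<longrightarrow>
            sc_p p n x (majority_vote n x)
              \<le> (2 powr p + 1) powr (1 / p) * (INF z\<in>{0..1}. sc_p p n x z))
       \<and> sc_inf n x (majority_vote n x) \<le> 2 * (INF z\<in>{0..1}. sc_inf n x z)"
proof
  let ?y = "majority_vote n x"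
  have bnd: "\<forall>i\<in>{..<n}. 0 \<le> cost (x i) ?y \<and> cost (x i) ?y \<le> 1 \<and> 0 \<le> cost (x i) z"
    if "z \<in> {0..1}" for z using cost_bnds assms(2) mv01 that by auto
  show "\<forall>p::real. 1 \<le> p \<longrightarrow> sc_p p n x ?y
              \<le> (2 powr p + 1) powr (1 / p) * (INF z\<in>{0..1}. sc_p p n x z)"
  proof (intro allI impI)
    fix p :: real assume p: "1 \<le> p"
    define C where "C = (2 powr p + 1) powr (1 / p)"
    have pos2: "2 powr p + 1 > (0::real)" by (simp add: add_pos_nonneg)
    have Cpos: "C > 0" unfolding C_def using pos2 by simp
    have each: "sc_p p n x ?y \<le> C * sc_p p n x z" if z: "z \<in> {0..1}" for z
    proof -
      have S: "(\<Sum>i<n. cost (x i) ?y powr p) \<le> (2 powr p + 1) * (\<Sum>i<n. cost (x i) z powr p)"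
        by (rule sum_bound[OF p _ bnd[OF z] core[OF assms(2) z]]) simp
      have "sc_p p n x ?y \<le> ((2 powr p + 1) * (\<Sum>i<n. cost (x i) z powr p)) powr (1/p)"
        unfolding sc_p_def using S p by (intro powr_mono2) (auto simp: sum_nonneg)
      also have "\<dots> = C * sc_p p n x z" unfolding C_def sc_p_def
        by (rule powr_mult)
      finally show ?thesis .
    qed
    have "sc_p p n x ?y / C \<le> (INF z\<in>{0..1}. sc_p p n x z)"
    proof (rule cINF_greatest)
      fix z :: real assume "z \<in> {0..1}"
      then show "sc_p p n x ?y / C \<le> sc_p p n x z" using each Cpos
        by (simp add: divide_le_eq mult.commute)
    qed simp
    then show "sc_p p n x ?y \<le> (2 powr p + 1) powr (1 / p) * (INF z\<in>{0..1}. sc_p p n x z)"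
      using Cpos unfolding C_def[symmetric] by (simp add: divide_le_eq mult.commute)
  qed
  have fin: "finite ((\<lambda>i. cost (x i) z) ` {..<n})" for z by simp
  have ne: "((\<lambda>i. cost (x i) z) ` {..<n}) \<noteq> {}" for z using assms(1) by (auto simp: lessThan_empty_iff)
  have each: "sc_inf n x ?y \<le> 2 * sc_inf n x z" if z: "z \<in> {0..1}" for z
    using core[OF assms(2) z]
  proof
    assume h: "\<forall>i\<in>{..<n}. cost (x i) ?y \<le> 2 * cost (x i) z"
    show ?thesis unfolding sc_inf_def
    proof (subst Max_le_iff[OF fin ne], intro ballI)
      fix a assume "a \<in> (\<lambda>i. cost (x i) ?y) ` {..<n}"
      then obtain i where i: "i < n" "a = cost (x i) ?y" by auto
      have "cost (x i) z \<le> Max ((\<lambda>i. cost (x i) z) ` {..<n})" using i by (intro Max_ge) auto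
      moreover have "cost (x i) ?y \<le> 2 * cost (x i) z" using h i by simp
      ultimately show "a \<le> 2 * Max ((\<lambda>i. cost (x i) z) ` {..<n})" using i(2) by linarith
    qed
  next
    assume "\<exists>B\<subseteq>{..<n}. card ({..<n}-B) \<le> card B \<and>
         (\<forall>i\<in>B. cost (x i) ?y \<le> 1/2 \<and> 1/2 \<le> cost (x i) z)"
    then obtain B where B: "B \<subseteq> {..<n}" "card ({..<n}-B) \<le> card B"
         "\<forall>i\<in>B. cost (x i) ?y \<le> 1/2 \<and> 1/2 \<le> cost (x i) z" by blast
    have "B \<noteq> {}" using B(2) assms(1) by auto
    then obtain b where b: "b \<in> B" by auto
    have "cost (x b) z \<le> Max ((\<lambda>i. cost (x i) z) ` {..<n})" using b B(1) by (intro Max_ge) auto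
    moreover have "Max ((\<lambda>i. cost (x i) ?y) ` {..<n}) \<le> 1"
      using bnd[OF z] by (subst Max_le_iff[OF fin ne]) auto
    ultimately show ?thesis unfolding sc_inf_def using B(3) b by force
  qed
  have "sc_inf n x ?y / 2 \<le> (INF z\<in>{0..1}. sc_inf n x z)"
    by (rule cINF_greatest) (use each in \<open>auto simp: mult.commute\<close>)
  then show "sc_inf n x ?y \<le> 2 * (INF z\<in>{0..1}. sc_inf n x z)" by simp
qed

end
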